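(* Let $(a_n(q))$ be a $q$-Euler–Gauss sequence with $a_n(1)\neq0$ for all $n\ge1$. Then $(a_n(q))$ is a $q$-Gauss sequence.
   Context: $\mu$ is the Möbius function, $[n]_q=1+q+\dots+q^{n-1}$; polynomial congruences modulo $[n]_q$ mean divisibility of the difference by $[n]_q$ in $\mathbb{Z}[q]$. A sequence $(a_n(q))$ in $\mathbb{Z}[q]$ is a $q$-Euler–Gauss sequence if for all $n\ge1$, $\prod_{d\mid n,\,\mu(d)=1}a_{n/d}(q^d)\equiv\prod_{d\mid n,\,\mu(d)=-1}a_{n/d}(q^d)\pmod{[n]_q}$; it is a $q$-Gauss sequence if $\sum_{d\mid n}\mu(d)a_{n/d}(q^d)\equiv0\pmod{[n]_q}$ for all $n\ge1$. *)

theory Defs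
  imports "HOL-Computational_Algebra.Computational_Algebra"
begin

definition moebius_mu :: "nat \<Rightarrow> int" where
  "moebius_mu n = (if n = 0 then 0
     else if squarefree n then (-1) ^ card (prime_factors n) else 0)"

definition q_int :: "nat \<Rightarrow> int poly" where
  "q_int n = (\<Sum>i<n. monom 1 i)"

definition subst_qpow :: "int poly \<Rightarrow> nat \<Rightarrow> int poly" where
  "subst_qpow p d = pcompose p (monom 1 d)"

definition q_Euler_Gauss :: "(nat \<Rightarrow> int poly) \<Rightarrow> bool" where
  "q_Euler_Gauss a \<longleftrightarrow> (\<forall>n\<ge>1. q_int n dvd
      ((\<Prod>d\<in>{d. d dvd n \<and> moebius_mu d = 1}. subst_qpow (a (n div d)) d)
     - (\<Prod>d\<in>{d. d dvd n \<and> moebius_mu d = -1}. subst_qpow (a (n div d)) d)))"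

definition q_Gauss :: "(nat \<Rightarrow> int poly) \<Rightarrow> bool" where
  "q_Gauss a \<longleftrightarrow> (\<forall>n\<ge>1. q_int n dvd
      (\<Sum>d\<in>{d. d dvd n}. smult (moebius_mu d) (subst_qpow (a (n div d)) d)))"

end

theory Submission
  imports Defs
begin

definition cp :: "int poly \<Rightarrow> complex poly" where "cp p = map_poly of_int p"
definition ev :: "int poly \<Rightarrow> complex \<Rightarrow> complex" where "ev p z = poly (cp p) z"

lemma cp_add: "cp (p + q) = cp p + cp q"
  unfolding cp_def by (rule poly_eqI) (simp add: coeff_map_poly)
lemma cp_diff: "cp (p - q) = cp p - cp q"
  unfolding cp_def by (rule poly_eqI) (simp add: coeff_map_poly)
lemma cp_smult: "cp (smult c p) = smult (of_int c) (cp p)"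
  unfolding cp_def by (rule poly_eqI) (simp add: coeff_map_poly)
lemma cp_mult: "cp (p * q) = cp p * cp q"
  unfolding cp_def by (rule poly_eqI) (simp add: coeff_map_poly coeff_mult)
lemma cp_1: "cp 1 = 1"
  unfolding cp_def by simp
lemma cp_0: "cp 0 = 0"
  unfolding cp_def by simp
lemma cp_sum: "cp (sum f A) = (\<Sum>x\<in>A. cp (f x))"
  by (induction A rule: infinite_finite_induct) (simp_all add: cp_add cp_0)
lemma cp_prod: "cp (prod f A) = (\<Prod>x\<in>A. cp (f x))"
  by (induction A rule: infinite_finite_induct) (simp_all add: cp_mult cp_1)
lemma cp_monom: "cp (monom c n) = monom (of_int c) n"
  by (simp add: cp_def map_poly_monom)
lemma cp_pCons: "cp (pCons a p) = pCons (of_int a) (cp p)"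
  by (simp add: cp_def map_poly_pCons)
lemma cp_pcompose: "cp (pcompose p q) = pcompose (cp p) (cp q)"
  by (induction p) (simp_all add: pcompose_pCons cp_add cp_mult cp_pCons cp_0)
lemma cp_eq_0_iff: "cp p = 0 \<longleftrightarrow> p = 0"
  unfolding cp_def by (rule map_poly_eq_0_iff) auto
lemma degree_cp: "degree (cp p) = degree p"
  unfolding cp_def by (rule degree_map_poly) auto

lemma ev_subst: "ev (subst_qpow p d) z = ev p (z ^ d)"
  by (simp add: ev_def subst_qpow_def cp_pcompose poly_pcompose cp_monom poly_monom)
lemma ev_1: "ev p 1 = of_int (poly p 1)"
  unfolding ev_def by (induction p) (simp_all add: cp_pCons cp_0)
lemma ev_mult: "ev (p * q) z = ev p z * ev q z"
  by (simp add: ev_def cp_mult)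
lemma ev_diff: "ev (p - q) z = ev p z - ev q z"
  by (simp add: ev_def cp_diff)
lemma ev_prod: "ev (prod f A) z = (\<Prod>x\<in>A. ev (f x) z)"
  by (simp add: ev_def cp_prod poly_prod)
lemma ev_sum: "ev (sum f A) z = (\<Sum>x\<in>A. ev (f x) z)"
  by (simp add: ev_def cp_sum poly_sum)
lemma ev_smult: "ev (smult c p) z = of_int c * ev p z"
  by (simp add: ev_def cp_smult)
lemma ev_qint: "ev (q_int n) z = (\<Sum>i<n. z ^ i)"
  by (simp add: ev_def q_int_def cp_sum cp_monom poly_sum poly_monom)

lemma ev_qint_root: assumes "z ^ n = 1" "z \<noteq> 1" shows "ev (q_int n) z = 0"
  using assms by (simp add: ev_qint geometric_sum)

lemma coeff_qint: "coeff (q_int n) k = (if k < n then 1 else 0)"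
  by (simp add: q_int_def coeff_sum coeff_monom)

lemma degree_qint: assumes "n \<ge> 1" shows "degree (q_int n) = n - 1"
proof (rule antisym)
  show "degree (q_int n) \<le> n - 1"
    by (rule degree_le) (auto simp: coeff_qint)
  show "n - 1 \<le> degree (q_int n)"
    by (rule le_degree) (use assms in \<open>auto simp: coeff_qint\<close>)
qed

lemma lead_qint: assumes "n \<ge> 1" shows "lead_coeff (q_int n) = 1"
  using assms by (simp add: degree_qint coeff_qint)


lemma roots_prod_dvd:
  fixes S :: "complex poly"
  assumes "finite A" "\<forall>a\<in>A. poly S a = 0"
  shows "(\<Prod>a\<in>A. [:-a,1:]) dvd S"
  using assms
proof (induction A arbitrary: S rule: finite_induct)
  case empty
  then show ?case by simp
next
  case (insert b A)
  then obtain Q where Q: "S = (\<Prod>a\<in>A. [:-a,1:]) * Q" by (meson dvd_def insertCI)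
  have "poly S b = 0" using insert by simp
  moreover have "poly (\<Prod>a\<in>A. [:-a,1:]) b \<noteq> 0"
    using insert(1,2) by (auto simp: poly_prod)
  ultimately have "poly Q b = 0" using Q by simp
  then have "[:-b,1:] dvd Q" by (simp add: poly_eq_0_iff_dvd)
  then have "[:-b,1:] * (\<Prod>a\<in>A. [:-a,1:]) dvd (\<Prod>a\<in>A. [:-a,1:]) * Q"
    by (metis mult.commute mult_dvd_mono dvd_refl)
  then show ?case using insert(1,2) Q by (simp only: prod.insert[OF insert(1,2)])
qed

lemma qint_dvd_cp:
  fixes S :: "complex poly"
  assumes n: "n \<ge> 1" and roots: "\<And>z. z ^ n = 1 \<Longrightarrow> z \<noteq> 1 \<Longrightarrow> poly S z = 0"
  shows "cp (q_int n) dvd S"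
proof -
  define A where "A = {z::complex. z ^ n = 1} - {1}"
  have finA: "finite A" unfolding A_def using n by (auto intro: finite_roots_unity)
  have cardA: "card A = n - 1" unfolding A_def using n
    by (subst card_Diff_singleton) (auto simp: card_roots_unity_eq intro: finite_roots_unity)
  define P where "P = (\<Prod>a\<in>A. [:-a,1:])"
  have degP: "degree P = n - 1"
    unfolding P_def using finA cardA by (subst degree_prod_eq_sum_degree) auto
  have P_dvd_S: "P dvd S" unfolding P_def
    by (rule roots_prod_dvd[OF finA]) (auto simp: A_def roots)
  have T0: "cp (q_int n) \<noteq> 0"
  proof
    assume "cp (q_int n) = 0"
    then have "q_int n = 0" by (simp add: cp_eq_0_iff)
    then have "coeff (q_int n) 0 = 0" by simp
    then show False using n by (simp add: coeff_qint)
  qed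
  have "P dvd cp (q_int n)" unfolding P_def
    by (rule roots_prod_dvd[OF finA]) (auto simp: A_def ev_qint_root[unfolded ev_def])
  then obtain c where c: "cp (q_int n) = P * c" by (auto simp: dvd_def)
  have P0: "P \<noteq> 0" and c0: "c \<noteq> 0" using T0 c by auto
  have "degree (cp (q_int n)) = degree P + degree c"
    using c P0 c0 by (simp add: degree_mult_eq)
  then have "degree c = 0" using degP n by (simp add: degree_cp degree_qint)
  then obtain c0 where c0def: "c = [:c0:]" by (meson degree_eq_zeroE)
  with c0 have "c0 \<noteq> 0" by simp
  then have "P = cp (q_int n) * [:1/c0:]" using c c0def by (simp add: mult.assoc)
  then have "cp (q_int n) dvd P" by (metis dvd_triv_left)
  then show ?thesis using P_dvd_S by (rule dvd_trans)
qed

lemma lift_dvd: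
  assumes lc: "lead_coeff T = 1" and dv: "cp T dvd cp S"
  shows "T dvd S"
proof -
  have T0: "T \<noteq> 0" using lc by auto
  obtain q r where qr: "pseudo_divmod S T = (q, r)" by (cases "pseudo_divmod S T") auto
  have eq: "S = T * q + r" using pseudo_divmod(1)[OF T0 qr] lc by simp
  have rd: "r = 0 \<or> degree r < degree T" using pseudo_divmod(2)[OF T0 qr] .
  have "cp S = cp T * cp q + cp r" using eq by (simp add: cp_add cp_mult)
  then have "cp T dvd cp r" using dv by (metis dvd_add_right_iff dvd_triv_left)
  have "r = 0"
  proof (rule ccontr)
    assume "r \<noteq> 0"
    then have "cp r \<noteq> 0" by (simp add: cp_eq_0_iff)
    then have "degree (cp T) \<le> degree (cp r)" using \<open>cp T dvd cp r\<close> by (rule dvd_imp_degree_le[rotated])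
    then show False using rd \<open>r \<noteq> 0\<close> by (simp add: degree_cp)
  qed
  then show ?thesis using eq by simp
qed


lemma mu_1: "moebius_mu 1 = 1" by (simp add: moebius_mu_def)

lemma mu_cases: "moebius_mu d = 1 \<or> moebius_mu d = -1 \<or> moebius_mu d = 0"
  unfolding moebius_mu_def by (auto simp: minus_one_power_iff)

lemma mu_nonzero: "moebius_mu d \<noteq> 0 \<Longrightarrow> d > 0 \<and> squarefree d"
  unfolding moebius_mu_def by (auto split: if_splits)

lemma mu_prime_mult:
  assumes p: "prime p" and nd: "\<not> p dvd e" and e: "e > 0"
  shows "moebius_mu (p*e) = - moebius_mu e"
proof -
  have cop: "coprime p e" using p nd by (simp add: prime_imp_coprime)
  have sq: "squarefree (p*e) \<longleftrightarrow> squarefree e"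
    using squarefree_multD(2)[of p e] squarefree_mult_coprime[OF cop] squarefree_prime[OF p] by blast
  have pf: "prime_factors (p*e) = insert p (prime_factors e)"
    using p e by (auto simp: prime_factors_product prime_factorization_mult prime_prime_factors
       prime_factorization_prime)
  have pn: "p \<notin> prime_factors e" using nd by auto
  have ne: "p * e \<noteq> 0" using p e by auto
  show ?thesis unfolding moebius_mu_def using ne e sq pf pn by simp
qed

definition phi :: "nat \<Rightarrow> nat \<Rightarrow> nat" where
  "phi p d = (if p dvd d then d div p else p * d)"

lemma lcm_pe:
  fixes m p e :: nat
  assumes "p dvd m" "coprime p e"
  shows "lcm m (p*e) = lcm m e"
proof -
  have "p * e = lcm p e" using assms(2) by (simp add: lcm_coprime)
  then have "lcm m (p*e) = lcm (lcm m p) e" by (simp add: lcm.assoc)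
  also have "lcm m p = m" using assms(1) by (simp add: lcm_proj1_iff)
  finally show ?thesis .
qed

lemma phi_key:
  fixes p m n d :: nat
  assumes p: "prime p" and pm: "p dvd m" and mn: "m dvd n" and n: "n > 0"
    and dn: "d dvd n" and mu: "moebius_mu d \<noteq> 0"
  shows "phi p d dvd n" "moebius_mu (phi p d) = - moebius_mu d"
        "phi p (phi p d) = d" "lcm m (phi p d) = lcm m d"
proof -
  have d0: "d > 0" and sqd: "squarefree d" using mu_nonzero[OF mu] by auto
  have pn: "p dvd n" using pm mn by (rule dvd_trans)
  have p0: "p > 0" using p by (simp add: prime_gt_0_nat)
  have "phi p d dvd n \<and> moebius_mu (phi p d) = - moebius_mu d \<and>
        phi p (phi p d) = d \<and> lcm m (phi p d) = lcm m d"
  proof (cases "p dvd d")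
    case True
    then obtain e where de: "d = p * e" by (auto simp: dvd_def)
    have e0: "e > 0" using d0 de by auto
    have ne: "\<not> p dvd e"
    proof
      assume "p dvd e"
      then have "p^2 dvd d" using de by (auto simp: power2_eq_square)
      then have "is_unit p" using sqd by (auto simp: squarefree_def)
      then show False using p by simp
    qed
    have ph: "phi p d = e" using True de p0 by (simp add: phi_def)
    have ph2: "phi p e = d" using ne de by (simp add: phi_def)
    have "e dvd n" using dn de by (auto intro: dvd_mult_right)
    moreover have "moebius_mu e = - moebius_mu d" using mu_prime_mult[OF p ne e0] de by simp
    moreover have "lcm m d = lcm m e" using de lcm_pe[OF pm] p ne by (simp add: prime_imp_coprime)
    ultimately show ?thesis using ph ph2 by simp
  next
    case False
    have ph: "phi p d = p * d" using False by (simp add: phi_def)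
    have ph2: "phi p (p * d) = d" using p0 by (simp add: phi_def)
    have cop: "coprime p d" using p False by (simp add: prime_imp_coprime)
    have "p * d dvd n" using pn dn cop by (rule divides_mult)
    moreover have "moebius_mu (p*d) = - moebius_mu d" using mu_prime_mult[OF p False d0] .
    moreover have "lcm m (p*d) = lcm m d" using lcm_pe[OF pm cop] .
    ultimately show ?thesis using ph ph2 by simp
  qed
  then show "phi p d dvd n" "moebius_mu (phi p d) = - moebius_mu d"
        "phi p (phi p d) = d" "lcm m (phi p d) = lcm m d" by auto
qed

lemma pair_prod:
  fixes G :: "nat \<Rightarrow> 'a::comm_monoid_mult"
  assumes p: "prime p" and pm: "p dvd m" and mn: "m dvd n" and n: "n > 0"
  shows "(\<Prod>d\<in>{d. d dvd n \<and> moebius_mu d = 1}. G (lcm m d))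
       = (\<Prod>d\<in>{d. d dvd n \<and> moebius_mu d = -1}. G (lcm m d))"
  by (rule prod.reindex_bij_witness[of _ "phi p" "phi p"])
     (auto simp: phi_key[OF p pm mn n])

lemma pair_sum:
  fixes G :: "nat \<Rightarrow> 'a::ab_group_add"
  assumes p: "prime p" and pm: "p dvd m" and mn: "m dvd n" and n: "n > 0"
  shows "(\<Sum>d\<in>{d. d dvd n \<and> moebius_mu d = 1}. G (lcm m d))
       = (\<Sum>d\<in>{d. d dvd n \<and> moebius_mu d = -1}. G (lcm m d))"
  by (rule sum.reindex_bij_witness[of _ "phi p" "phi p"])
     (auto simp: phi_key[OF p pm mn n])

lemma mu_sum_zero:
  fixes G :: "nat \<Rightarrow> complex"
  assumes m1: "m \<noteq> 1" and mn: "m dvd n" and n: "n > 0"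
  shows "(\<Sum>d\<in>{d. d dvd n}. of_int (moebius_mu d) * G (lcm m d)) = 0"
proof -
  obtain p where p: "prime p" "p dvd m" using prime_factor_nat[OF m1] by blast
  have fin: "finite {d. d dvd n}" using n by simp
  have "\<And>d. of_int (moebius_mu d) * G (lcm m d) =
     (if moebius_mu d = 1 then G (lcm m d) else 0) - (if moebius_mu d = -1 then G (lcm m d) else 0)"
    using mu_cases by fastforce
  then have "(\<Sum>d\<in>{d. d dvd n}. of_int (moebius_mu d) * G (lcm m d)) =
     (\<Sum>d\<in>{d. d dvd n}. (if moebius_mu d = 1 then G (lcm m d) else 0))
     - (\<Sum>d\<in>{d. d dvd n}. (if moebius_mu d = -1 then G (lcm m d) else 0))"
    by (simp add: sum_subtractf)
  also have "\<dots> = (\<Sum>d\<in>{d. d dvd n \<and> moebius_mu d = 1}. G (lcm m d))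
       - (\<Sum>d\<in>{d. d dvd n \<and> moebius_mu d = -1}. G (lcm m d))"
    using fin by (simp add: sum.inter_filter[symmetric])
  also have "\<dots> = 0" using pair_sum[OF p mn n] by simp
  finally show ?thesis .
qed

definition prim :: "complex \<Rightarrow> nat \<Rightarrow> bool" where
  "prim z m \<longleftrightarrow> (\<forall>j. z ^ j = 1 \<longleftrightarrow> m dvd j)"

lemma prim_exists:
  assumes "z ^ n = 1" "n > 0"
  shows "\<exists>m. prim z m"
proof -
  define m where "m = (LEAST k. 0 < k \<and> z ^ k = 1)"
  have m: "0 < m \<and> z ^ m = 1" unfolding m_def by (rule LeastI[of _ n]) (use assms in auto)
  have "z ^ j = 1 \<longleftrightarrow> m dvd j" for j
  proof
    assume zj: "z ^ j = 1"
    have "z ^ j = z ^ (m * (j div m) + j mod m)" by simp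
    also have "\<dots> = (z ^ m) ^ (j div m) * z ^ (j mod m)" by (simp only: power_add power_mult)
    also have "\<dots> = z ^ (j mod m)" using m by simp
    finally have "z ^ (j mod m) = 1" using zj by simp
    moreover have "j mod m < m" using m by simp
    ultimately have "\<not> (0 < j mod m)" using not_less_Least[of "j mod m" "\<lambda>k. 0 < k \<and> z ^ k = 1"]
      unfolding m_def[symmetric] by (metis (no_types, lifting))
    then show "m dvd j" by (simp add: mod_eq_0_iff_dvd)
  next
    assume "m dvd j"
    then show "z ^ j = 1" using m by (auto simp: power_mult)
  qed
  then show ?thesis unfolding prim_def by blast
qed

lemma dvd_div_gcd:
  fixes m d j :: nat
  assumes "m > 0"
  shows "m dvd d * j \<longleftrightarrow> m div gcd m d dvd j"
proof -
  define g where "g = gcd m d"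
  have g0: "g > 0" using assms by (simp add: g_def)
  obtain m' d' where md: "m = g * m'" "d = g * d'" unfolding g_def
    by (meson gcd_dvd1 gcd_dvd2 dvdE)
  have cop: "coprime m' d'" using md g0 assms
    by (metis g_def div_gcd_coprime gr_implies_not0 mult_zero_left nonzero_mult_div_cancel_left)
  have "m dvd d * j \<longleftrightarrow> m' dvd d' * j" using md g0 by (simp add: mult.assoc)
  also have "\<dots> \<longleftrightarrow> m' dvd j" using cop by (simp add: coprime_dvd_mult_right_iff)
  also have "m' = m div g" using md g0 by simp
  finally show ?thesis by (simp add: g_def)
qed

lemma prim_pow:
  assumes "prim z m" "m > 0"
  shows "prim (z ^ d) (m div gcd m d)"
  using assms dvd_div_gcd[OF assms(2)] unfolding prim_def by (simp add: power_mult[symmetric])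

lemma lcm_eq_mult: "(d::nat) * (m div gcd m d) = lcm m d"
  by (simp add: lcm_nat_def div_mult_swap mult.commute)


definition PP :: "(nat \<Rightarrow> int poly) \<Rightarrow> nat \<Rightarrow> bool" where
  "PP a k \<longleftrightarrow> (\<forall>z e. prim z e \<longrightarrow> e dvd k \<longrightarrow> ev (a k) z = ev (a (k div e)) 1)"

lemma div_ge1:
  assumes "k dvd n" "(n::nat) \<ge> 1" shows "1 \<le> n div k"
proof -
  have k: "k > 0" using assms by (auto intro!: Nat.gr0I)
  have "k \<le> n" using assms dvd_imp_le by auto
  then have "0 < n div k" using k by (simp add: div_greater_zero_iff)
  then show ?thesis by simp
qed

lemma PP_apply:
  assumes z: "prim z m" and m0: "m > 0" and dn: "d dvd n" and mn: "m dvd n" and n: "n > 0"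
    and P: "PP a (n div d)"
  shows "ev (a (n div d)) (z ^ d) = ev (a (n div lcm m d)) 1"
proof -
  define e where "e = m div gcd m d"
  have pe: "prim (z ^ d) e" unfolding e_def using prim_pow[OF z m0] .
  have d0: "d > 0" using dn n by (auto intro!: Nat.gr0I)
  have de: "d * e = lcm m d" unfolding e_def by (rule lcm_eq_mult)
  have "lcm m d dvd n" using mn dn by (rule lcm_least)
  then have "e * d dvd n" using de by (simp add: mult.commute)
  then have edv: "e dvd n div d" using d0 dn by (simp add: dvd_div_iff_mult)
  have "n div d div e = n div lcm m d" using de by (simp add: div_mult2_eq[symmetric])
  then show ?thesis using P pe edv unfolding PP_def by metis
qed

lemma EG_step:
  assumes EG: "q_Euler_Gauss a" and nz: "\<And>n. n \<ge> 1 \<Longrightarrow> poly (a n) 1 \<noteq> 0"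
    and n: "n \<ge> 1" and IH: "\<And>k. 1 \<le> k \<Longrightarrow> k < n \<Longrightarrow> PP a k"
  shows "PP a n"
  unfolding PP_def
proof (intro allI impI)
  fix z m assume z: "prim z m" and mn: "m dvd n"
  have m0: "m > 0" using mn n by (auto intro!: Nat.gr0I)
  show "ev (a n) z = ev (a (n div m)) 1"
  proof (cases "m = 1")
    case True
    then have "z = 1" using z unfolding prim_def by (metis power_one_right dvd_refl)
    then show ?thesis using True by simp
  next
    case False
    obtain p where p: "prime p" "p dvd m" using prime_factor_nat[OF False] by blast
    have zn: "z ^ n = 1" using z mn unfolding prim_def by blast
    have z1: "z \<noteq> 1" using z False unfolding prim_def by (metis nat_dvd_1_iff_1 power_one)
    define Dp where "Dp = {d. d dvd n \<and> moebius_mu d = 1}"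
    define Dm where "Dm = {d. d dvd n \<and> moebius_mu d = -1}"
    define G where "G = (\<lambda>l. ev (a (n div l)) 1)"
    have finp: "finite Dp" and finm: "finite Dm" using n by (auto simp: Dp_def Dm_def)
    have "q_int n dvd (\<Prod>d\<in>Dp. subst_qpow (a (n div d)) d) - (\<Prod>d\<in>Dm. subst_qpow (a (n div d)) d)"
      using EG n unfolding q_Euler_Gauss_def Dp_def Dm_def by blast
    then obtain Q where Q: "(\<Prod>d\<in>Dp. subst_qpow (a (n div d)) d) - (\<Prod>d\<in>Dm. subst_qpow (a (n div d)) d) = q_int n * Q"
      by (auto simp: dvd_def)
    have "ev (q_int n * Q) z = 0" using ev_qint_root[OF zn z1] by (simp add: ev_mult)
    then have eq: "(\<Prod>d\<in>Dp. ev (a (n div d)) (z ^ d)) = (\<Prod>d\<in>Dm. ev (a (n div d)) (z ^ d))"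
      using arg_cong[OF Q, of "\<lambda>p. ev p z"] by (simp add: ev_diff ev_prod ev_subst)
    have val: "ev (a (n div d)) (z ^ d) = G (lcm m d)" if "d dvd n" "d \<noteq> 1" for d
    proof -
      have d0: "d > 0" using that n by (auto intro!: Nat.gr0I)
      have "1 \<le> n div d" using that(1) n by (rule div_ge1)
      moreover have "n div d < n" using that n d0 by (simp add: div_less_dividend)
      ultimately have "PP a (n div d)" by (rule IH)
      then show ?thesis unfolding G_def using PP_apply[OF z m0 that(1) mn] n by simp
    qed
    have Gnz: "G (lcm m d) \<noteq> 0" if "d dvd n" for d
    proof -
      have "lcm m d dvd n" using mn that by (rule lcm_least)
      then have "n div lcm m d \<ge> 1" using n by (rule div_ge1)
      then show ?thesis unfolding G_def using nz by (simp add: ev_1)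
    qed
    have one: "1 \<in> Dp" using mu_1 by (simp add: Dp_def)
    have "(\<Prod>d\<in>Dp. ev (a (n div d)) (z ^ d)) = ev (a n) z * (\<Prod>d\<in>Dp - {1}. G (lcm m d))"
    proof -
      have "(\<Prod>d\<in>Dp. ev (a (n div d)) (z ^ d)) = ev (a (n div 1)) (z ^ 1) * (\<Prod>d\<in>Dp - {1}. ev (a (n div d)) (z ^ d))"
        using finp one by (rule prod.remove)
      also have "(\<Prod>d\<in>Dp - {1}. ev (a (n div d)) (z ^ d)) = (\<Prod>d\<in>Dp - {1}. G (lcm m d))"
        using val by (intro prod.cong) (auto simp: Dp_def)
      finally show ?thesis by simp
    qed
    moreover have "(\<Prod>d\<in>Dm. ev (a (n div d)) (z ^ d)) = (\<Prod>d\<in>Dm. G (lcm m d))"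
    proof (rule prod.cong[OF refl])
      fix d assume "d \<in> Dm"
      then have "d dvd n" "d \<noteq> 1" using mu_1 by (auto simp: Dm_def)
      then show "ev (a (n div d)) (z ^ d) = G (lcm m d)" by (rule val)
    qed
    moreover have "(\<Prod>d\<in>Dm. G (lcm m d)) = (\<Prod>d\<in>Dp. G (lcm m d))"
      unfolding Dp_def Dm_def using pair_prod[OF p mn, of G] n by simp
    moreover have "(\<Prod>d\<in>Dp. G (lcm m d)) = G m * (\<Prod>d\<in>Dp - {1}. G (lcm m d))"
      using finp one by (simp add: prod.remove)
    moreover have "(\<Prod>d\<in>Dp - {1}. G (lcm m d)) \<noteq> 0"
      using finp Gnz by (auto simp: Dp_def)
    ultimately have "ev (a n) z = G m" using eq by simp
    then show ?thesis by (simp add: G_def)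
  qed
qed

lemma all_PP:
  assumes EG: "q_Euler_Gauss a" and nz: "\<And>n. n \<ge> 1 \<Longrightarrow> poly (a n) 1 \<noteq> 0"
  shows "n \<ge> 1 \<Longrightarrow> PP a n"
proof (induction n rule: less_induct)
  case (less n)
  then show ?case using EG_step[OF EG nz] by blast
qed

theorem theorem6:
  fixes a :: "nat \<Rightarrow> int poly"
  assumes "q_Euler_Gauss a"
    and "\<And>n. n \<ge> 1 \<Longrightarrow> poly (a n) 1 \<noteq> 0"
  shows "q_Gauss a"
  unfolding q_Gauss_def
proof (intro allI impI)
  fix n :: nat assume n: "n \<ge> 1"
  define S where "S = (\<Sum>d\<in>{d. d dvd n}. smult (moebius_mu d) (subst_qpow (a (n div d)) d))"
  have "cp (q_int n) dvd cp S"
  proof (rule qint_dvd_cp[OF n])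
    fix z :: complex assume zn: "z ^ n = 1" and z1: "z \<noteq> 1"
    obtain m where z: "prim z m" using prim_exists[OF zn] n by auto
    have mn: "m dvd n" using z zn unfolding prim_def by blast
    have m0: "m > 0" using mn n by (auto intro!: Nat.gr0I)
    have m1: "m \<noteq> 1" using z z1 unfolding prim_def by (metis power_one_right dvd_refl)
    have "poly (cp S) z = (\<Sum>d\<in>{d. d dvd n}. of_int (moebius_mu d) * ev (a (n div d)) (z ^ d))"
      unfolding S_def by (simp add: ev_def[symmetric] ev_sum ev_smult ev_subst)
    also have "\<dots> = (\<Sum>d\<in>{d. d dvd n}. of_int (moebius_mu d) * ev (a (n div lcm m d)) 1)"
    proof (rule sum.cong)
      fix d assume "d \<in> {d. d dvd n}"
      then have dn: "d dvd n" by simp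
      have d0: "d > 0" using dn n by (auto intro!: Nat.gr0I)
      have "1 \<le> n div d" using dn n by (rule div_ge1)
      then have "PP a (n div d)" using all_PP[OF assms] by blast
      then show "of_int (moebius_mu d) * ev (a (n div d)) (z ^ d) = of_int (moebius_mu d) * ev (a (n div lcm m d)) 1"
        using PP_apply[OF z m0 dn mn] n by simp
    qed simp
    also have "\<dots> = 0" using mu_sum_zero[OF m1 mn] n by simp
    finally show "poly (cp S) z = 0" .
  qed
  then show "q_int n dvd S" using lift_dvd lead_qint[OF n] by blast
qed

end
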